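(* Let $I=(G,E^\ell,E^f,s,t,c,d)$ be an instance of the Bilevel Shortest Path problem in the weak path completion variant, where $G$ is directed or undirected. Then there exists a pair $(X,Y)$ with $X\subseteq E^\ell$ and $Y\subseteq E^f$ such that $X$ is an optimal choice for the leader's problem, $Y$ is an optimal choice for the follower's problem given $X$, and $X\cup Y$ is an $s$-$t$-path, i.e. $X\cup Y\in\mathcal P_{st}$.
   Context: An instance is $I=(G,E^\ell,E^f,s,t,c,d)$: $G=(V,E)$ a simple directed or undirected graph, $E=E^\ell\cup E^f$ a partition (leader's and follower's edges), $s,t\in V$, $c,d:E\to\mathbb{R}_{\ge0}$; $f(Z)=\sum_{e\in Z}f(e)$. Paths are simple and identified with edge sets; $\mathcal P_{st}$, the set of $s$-$t$-paths, is assumed nonempty. Weak variant: $\mathrm{OPT}_{\mathrm{weak}}(I)=\min c(X\cup Y)$ over $X\subseteq E^\ell$ and $Y\in\arg\min\{d(Y'):Y'\subseteq E^f,\ \exists P\subseteq X\cup Y' \text{ with } P\in\mathcal P_{st}\}$; leader choices making the follower's problem infeasible are infeasible; optimistic setting: among follower-optimal responses the follower picks one minimizing $c(Y)$. An optimal choice for the leader is a feasible $X$ attaining $\mathrm{OPT}_{\mathrm{weak}}(I)$. *)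

theory Defs
  imports Complex_Main
begin

text \<open>A graph G = (V, E) with abstract edges; ends e = (u,v) gives the endpoints of e
  (tail and head if the graph is directed; an unordered pair if undirected).\<close>

definition edge_joins :: "bool \<Rightarrow> ('e \<Rightarrow> 'v \<times> 'v) \<Rightarrow> 'e \<Rightarrow> 'v \<Rightarrow> 'v \<Rightarrow> bool" where
  "edge_joins directed ends e u v \<longleftrightarrow>
     ends e = (u, v) \<or> (\<not> directed \<and> ends e = (v, u))"

definition simple_graph :: "bool \<Rightarrow> 'v set \<Rightarrow> 'e set \<Rightarrow> ('e \<Rightarrow> 'v \<times> 'v) \<Rightarrow> bool" where
  "simple_graph directed V E ends \<longleftrightarrow>
     finite V \<and> finite E \<and>
     (\<forall>e\<in>E. fst (ends e) \<in> V \<and> snd (ends e) \<in> V \<and> fst (ends e) \<noteq> snd (ends e)) \<and>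
     (\<forall>e\<in>E. \<forall>e'\<in>E. e \<noteq> e' \<longrightarrow>
        \<not> edge_joins directed ends e' (fst (ends e)) (snd (ends e)))"

definition is_st_path ::
  "bool \<Rightarrow> 'e set \<Rightarrow> ('e \<Rightarrow> 'v \<times> 'v) \<Rightarrow> 'v \<Rightarrow> 'v \<Rightarrow> 'e set \<Rightarrow> bool" where
  "is_st_path directed E ends s t P \<longleftrightarrow>
     (\<exists>vs es. length vs = Suc (length es) \<and> hd vs = s \<and> last vs = t \<and> distinct vs \<and>
        set es \<subseteq> E \<and>
        (\<forall>i < length es. edge_joins directed ends (es ! i) (vs ! i) (vs ! Suc i)) \<and>
        P = set es)"

definition bsp_instance ::
  "bool \<Rightarrow> 'v set \<Rightarrow> 'e set \<Rightarrow> ('e \<Rightarrow> 'v \<times> 'v) \<Rightarrow> 'e set \<Rightarrow> 'e set \<Rightarrow> 'v \<Rightarrow> 'v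
    \<Rightarrow> ('e \<Rightarrow> real) \<Rightarrow> ('e \<Rightarrow> real) \<Rightarrow> bool" where
  "bsp_instance directed V E ends El Ef s t c d \<longleftrightarrow>
     simple_graph directed V E ends \<and>
     El \<union> Ef = E \<and> El \<inter> Ef = {} \<and> s \<in> V \<and> t \<in> V \<and>
     (\<forall>e\<in>E. c e \<ge> 0 \<and> d e \<ge> 0) \<and>
     (\<exists>P. is_st_path directed E ends s t P)"

definition weak_follower_feasible ::
  "bool \<Rightarrow> 'e set \<Rightarrow> ('e \<Rightarrow> 'v \<times> 'v) \<Rightarrow> 'e set \<Rightarrow> 'v \<Rightarrow> 'v \<Rightarrow> 'e set \<Rightarrow> 'e set \<Rightarrow> bool" where
  "weak_follower_feasible directed E ends Ef s t X Y \<longleftrightarrow>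
     Y \<subseteq> Ef \<and> (\<exists>P. P \<subseteq> X \<union> Y \<and> is_st_path directed E ends s t P)"

definition weak_follower_argmin ::
  "bool \<Rightarrow> 'e set \<Rightarrow> ('e \<Rightarrow> 'v \<times> 'v) \<Rightarrow> 'e set \<Rightarrow> 'v \<Rightarrow> 'v \<Rightarrow> ('e \<Rightarrow> real)
    \<Rightarrow> 'e set \<Rightarrow> 'e set \<Rightarrow> bool" where
  "weak_follower_argmin directed E ends Ef s t d X Y \<longleftrightarrow>
     weak_follower_feasible directed E ends Ef s t X Y \<and>
     (\<forall>Y'. weak_follower_feasible directed E ends Ef s t X Y' \<longrightarrow> sum d Y \<le> sum d Y')"

text \<open>Optimistic setting: an optimal follower choice given X is an element of the argmin
  set minimising c(Y) among all elements of the argmin set.\<close>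
definition weak_follower_optimal ::
  "bool \<Rightarrow> 'e set \<Rightarrow> ('e \<Rightarrow> 'v \<times> 'v) \<Rightarrow> 'e set \<Rightarrow> 'v \<Rightarrow> 'v \<Rightarrow> ('e \<Rightarrow> real) \<Rightarrow> ('e \<Rightarrow> real)
    \<Rightarrow> 'e set \<Rightarrow> 'e set \<Rightarrow> bool" where
  "weak_follower_optimal directed E ends Ef s t c d X Y \<longleftrightarrow>
     weak_follower_argmin directed E ends Ef s t d X Y \<and>
     (\<forall>Y'. weak_follower_argmin directed E ends Ef s t d X Y' \<longrightarrow> sum c Y \<le> sum c Y')"

text \<open>X is an optimal leader choice: X \<subseteq> E^l is feasible and attains
  OPT_weak(I) = min c(X' \<union> Y') over X' \<subseteq> E^l and Y' in the follower's argmin given X'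
  (the follower's response to X chosen optimistically).\<close>
definition weak_leader_optimal ::
  "bool \<Rightarrow> 'e set \<Rightarrow> ('e \<Rightarrow> 'v \<times> 'v) \<Rightarrow> 'e set \<Rightarrow> 'e set \<Rightarrow> 'v \<Rightarrow> 'v
    \<Rightarrow> ('e \<Rightarrow> real) \<Rightarrow> ('e \<Rightarrow> real) \<Rightarrow> 'e set \<Rightarrow> bool" where
  "weak_leader_optimal directed E ends El Ef s t c d X \<longleftrightarrow>
     X \<subseteq> El \<and>
     (\<exists>Y. weak_follower_argmin directed E ends Ef s t d X Y \<and>
        (\<forall>X' Y'. X' \<subseteq> El \<longrightarrow> weak_follower_argmin directed E ends Ef s t d X' Y' \<longrightarrow>
            sum c (X \<union> Y) \<le> sum c (X' \<union> Y')))"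

end

theory Submission
  imports Defs
begin

lemma ex_min_real:
  assumes "finite S" "S \<noteq> {}"
  shows "\<exists>x\<in>S. \<forall>y\<in>S. (f x::real) \<le> f y"
proof -
  have "Min (f ` S) \<in> f ` S" using assms by simp
  then obtain x where x: "x \<in> S" "f x = Min (f ` S)" by auto
  have "\<forall>y\<in>S. f x \<le> f y" using x assms by simp
  then show ?thesis using x(1) by blast
qed

theorem lemma3p2:
  fixes directed :: bool and V :: "'v set" and E El Ef :: "'e set"
    and ends :: "'e \<Rightarrow> 'v \<times> 'v" and s t :: 'v and c d :: "'e \<Rightarrow> real"
  assumes "bsp_instance directed V E ends El Ef s t c d"
  shows "\<exists>X Y. X \<subseteq> El \<and> Y \<subseteq> Ef \<and>
           weak_leader_optimal directed E ends El Ef s t c d X \<and>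
           weak_follower_optimal directed E ends Ef s t c d X Y \<and>
           is_st_path directed E ends s t (X \<union> Y)"
proof -
  note I = assms[unfolded bsp_instance_def simple_graph_def]
  have finE: "finite E" and EU: "El \<union> Ef = E" and disj: "El \<inter> Ef = {}"
    and cpos: "\<And>e. e \<in> E \<Longrightarrow> c e \<ge> 0" and dpos: "\<And>e. e \<in> E \<Longrightarrow> d e \<ge> 0"
    using I by auto
  obtain P0 where P0: "is_st_path directed E ends s t P0" using I by auto
  have pathE: "\<And>P. is_st_path directed E ends s t P \<Longrightarrow> P \<subseteq> E"
    unfolding is_st_path_def by auto
  have finEl: "finite El" and finEf: "finite Ef" using finE EU by auto
  define F where "F = {Y. weak_follower_feasible directed E ends Ef s t El Y}"
  have "F \<subseteq> Pow Ef" unfolding F_def weak_follower_feasible_def by auto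
  hence finF: "finite F" using finEf finite_subset by blast
  have "Ef \<in> F" unfolding F_def weak_follower_feasible_def using P0 pathE[OF P0] EU by auto
  then obtain Y1 where Y1: "Y1 \<in> F" "\<forall>y\<in>F. sum d Y1 \<le> sum d y"
    using ex_min_real[OF finF, of "sum d"] by blast
  have Y1a: "weak_follower_argmin directed E ends Ef s t d El Y1"
    using Y1 unfolding F_def weak_follower_argmin_def by auto
  define S where "S = {(X',Y'). X' \<subseteq> El \<and> weak_follower_argmin directed E ends Ef s t d X' Y'}"
  have "S \<subseteq> Pow El \<times> Pow Ef"
    unfolding S_def weak_follower_argmin_def weak_follower_feasible_def by auto
  hence finS: "finite S" using finEl finEf finite_subset by blast
  have "(El, Y1) \<in> S" unfolding S_def using Y1a by auto
  then obtain p where p: "p \<in> S" "\<forall>q\<in>S. sum c (fst p \<union> snd p) \<le> sum c (fst q \<union> snd q)"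
    using ex_min_real[OF finS, of "\<lambda>q. sum c (fst q \<union> snd q)"] by blast
  obtain X0 Y0 where pe: "p = (X0, Y0)" by (cases p)
  have X0: "X0 \<subseteq> El" and A0: "weak_follower_argmin directed E ends Ef s t d X0 Y0"
    using p(1) pe unfolding S_def by auto
  have minS: "\<And>X' Y'. X' \<subseteq> El \<Longrightarrow> weak_follower_argmin directed E ends Ef s t d X' Y' \<Longrightarrow>
      sum c (X0 \<union> Y0) \<le> sum c (X' \<union> Y')"
  proof -
    fix X' Y' assume "X' \<subseteq> El" "weak_follower_argmin directed E ends Ef s t d X' Y'"
    hence "(X', Y') \<in> S" unfolding S_def by simp
    thus "sum c (X0 \<union> Y0) \<le> sum c (X' \<union> Y')" using p(2) pe by fastforce
  qed
  have Y0: "Y0 \<subseteq> Ef" using A0 unfolding weak_follower_argmin_def weak_follower_feasible_def by auto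
  obtain P where P: "P \<subseteq> X0 \<union> Y0" "is_st_path directed E ends s t P"
    using A0 unfolding weak_follower_argmin_def weak_follower_feasible_def by auto
  have PE: "P \<subseteq> E" using pathE P(2) .
  define X where "X = P \<inter> El"
  define Y where "Y = P \<inter> Ef"
  have XY: "X \<union> Y = P" unfolding X_def Y_def using PE EU by auto
  have XX0: "X \<subseteq> X0" unfolding X_def using P(1) Y0 disj by auto
  have YY0: "Y \<subseteq> Y0" unfolding Y_def using P(1) X0 disj by auto
  have XEl: "X \<subseteq> El" and YEf: "Y \<subseteq> Ef" unfolding X_def Y_def by auto
  have finY0: "finite Y0" using Y0 finEf finite_subset by blast
  have dY: "sum d Y \<le> sum d Y0"
    by (rule sum_mono2[OF finY0 YY0]) (use Y0 EU dpos in auto)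
  have feasY: "weak_follower_feasible directed E ends Ef s t X Y"
    unfolding weak_follower_feasible_def using YEf XY P(2) by auto
  have AY: "weak_follower_argmin directed E ends Ef s t d X Y"
    unfolding weak_follower_argmin_def
  proof (intro conjI allI impI feasY)
    fix Y' assume "weak_follower_feasible directed E ends Ef s t X Y'"
    hence "weak_follower_feasible directed E ends Ef s t X0 Y'"
      unfolding weak_follower_feasible_def using XX0 by blast
    hence "sum d Y0 \<le> sum d Y'" using A0 unfolding weak_follower_argmin_def by auto
    thus "sum d Y \<le> sum d Y'" using dY by linarith
  qed
  have finX0Y0: "finite (X0 \<union> Y0)" using X0 Y0 EU finE finite_subset by blast
  have cP: "sum c P \<le> sum c (X0 \<union> Y0)"
    by (rule sum_mono2[OF finX0Y0 P(1)]) (use X0 Y0 EU cpos in auto)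
  have best: "\<And>X' Y'. X' \<subseteq> El \<Longrightarrow> weak_follower_argmin directed E ends Ef s t d X' Y' \<Longrightarrow>
      sum c (X \<union> Y) \<le> sum c (X' \<union> Y')"
  proof -
    fix X' Y' assume "X' \<subseteq> El" "weak_follower_argmin directed E ends Ef s t d X' Y'"
    from minS[OF this] show "sum c (X \<union> Y) \<le> sum c (X' \<union> Y')" using cP XY by simp
  qed
  have LO: "weak_leader_optimal directed E ends El Ef s t c d X"
    unfolding weak_leader_optimal_def using XEl AY best by blast
  have finX: "finite X" using XEl finEl finite_subset by blast
  have FO: "weak_follower_optimal directed E ends Ef s t c d X Y"
    unfolding weak_follower_optimal_def
  proof (intro conjI allI impI AY)
    fix Y' assume A': "weak_follower_argmin directed E ends Ef s t d X Y'"
    have Y'Ef: "Y' \<subseteq> Ef" using A' unfolding weak_follower_argmin_def weak_follower_feasible_def by auto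
    have finY': "finite Y'" using Y'Ef finEf finite_subset by blast
    have finY: "finite Y" using YEf finEf finite_subset by blast
    have "sum c (X \<union> Y) \<le> sum c (X \<union> Y')" using best[OF XEl A'] .
    moreover have "sum c (X \<union> Y) = sum c X + sum c Y"
      by (rule sum.union_disjoint[OF finX finY]) (use XEl YEf disj in auto)
    moreover have "sum c (X \<union> Y') = sum c X + sum c Y'"
      by (rule sum.union_disjoint[OF finX finY']) (use XEl Y'Ef disj in auto)
    ultimately show "sum c Y \<le> sum c Y'" by linarith
  qed
  show ?thesis using XEl YEf LO FO XY P(2) by blast
qed

end
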